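(* Let $\alpha,c\in\mathbb{N}$, $\alpha,c\ge1$, and let $F=(n_F)_{n\ge0}$ with $0_F=1$ and $n_F=\alpha^{n-1}c^n$ for $n\ge1$ (so that $(m+k)_F=\alpha\, m_F\, k_F$ for all $m,k\ge1$). Then for all $1\le a\le b$, the layer $\langle\Phi_a\to\Phi_b\rangle$ of the cobweb poset of $F$ admits a tiling by blocks of type $\sigma P_{b-a+1}$.
   Context: Notation: $n_F\equiv F_n$. The cobweb poset of $F$ has, for each $s\ge1$, a level $\Phi_s$ consisting of $s_F$ distinct vertices (levels pairwise disjoint), plus a root level $\Phi_0$ with one vertex; for $x\in\Phi_i$, $y\in\Phi_j$ one has $x<y$ iff $i<j$. For $1\le a\le b$, the layer $\langle\Phi_a\to\Phi_b\rangle$ is the subposet on $\Phi_a\cup\dots\cup\Phi_b$; it has $m=b-a+1$ levels and its maximal chains form the set $\Phi_a\times\dots\times\Phi_b$. For a permutation $\sigma$ of $\{1,\dots,m\}$, a block of type $\sigma P_m$ in this layer is the subposet induced on $V_a\cup\dots\cup V_b$ where $V_{a-1+i}\subseteq\Phi_{a-1+i}$ and $|V_{a-1+i}|=\sigma(i)_F$ for $i=1,\dots,m$; its maximal chains form the set $V_a\times\dots\times V_b$. A tiling of the layer is a finite family of such blocks ($\sigma$ may vary from block to block) whose sets $V_a\times\dots\times V_b$ partition $\Phi_a\times\dots\times\Phi_b$ (pairwise max-disjoint and covering all maximal chains). *)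

theory Defs
  imports Main "HOL-Combinatorics.Permutations" "HOL-Library.FuncSet"
begin

definition Fab :: "nat \<Rightarrow> nat \<Rightarrow> nat \<Rightarrow> nat" where
  "Fab \<alpha> c n = (if n = 0 then 1 else \<alpha> ^ (n - 1) * c ^ n)"

(* Level s of the cobweb poset is represented by the vertices {..< F s} (tagged by s);
   a maximal chain of the layer <Phi_a -> Phi_b> is a function x on {a..b}
   with x s \<in> Phi_s, i.e. an element of PiE {a..b} (\<lambda>s. {..<F s}). *)
definition layer_chains :: "(nat \<Rightarrow> nat) \<Rightarrow> nat \<Rightarrow> nat \<Rightarrow> (nat \<Rightarrow> nat) set" where
  "layer_chains F a b = PiE {a..b} (\<lambda>s. {..<F s})"

definition is_block_of_type ::
  "(nat \<Rightarrow> nat) \<Rightarrow> nat \<Rightarrow> nat \<Rightarrow> (nat \<Rightarrow> nat) \<Rightarrow> (nat \<Rightarrow> nat set) \<Rightarrow> bool" where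
  "is_block_of_type F a b \<sigma> V \<longleftrightarrow>
     \<sigma> permutes {1..b - a + 1} \<and>
     (\<forall>i\<in>{1..b - a + 1}. V (a - 1 + i) \<subseteq> {..<F (a - 1 + i)} \<and>
                          card (V (a - 1 + i)) = F (\<sigma> i))"

definition is_block :: "(nat \<Rightarrow> nat) \<Rightarrow> nat \<Rightarrow> nat \<Rightarrow> (nat \<Rightarrow> nat set) \<Rightarrow> bool" where
  "is_block F a b V \<longleftrightarrow> (\<exists>\<sigma>. is_block_of_type F a b \<sigma> V)"

definition block_chains :: "nat \<Rightarrow> nat \<Rightarrow> (nat \<Rightarrow> nat set) \<Rightarrow> (nat \<Rightarrow> nat) set" where
  "block_chains a b V = PiE {a..b} V"

definition is_tiling :: "(nat \<Rightarrow> nat) \<Rightarrow> nat \<Rightarrow> nat \<Rightarrow> (nat \<Rightarrow> nat set) set \<Rightarrow> bool" where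
  "is_tiling F a b T \<longleftrightarrow>
     finite T \<and>
     (\<forall>V\<in>T. is_block F a b V) \<and>
     (\<forall>V\<in>T. \<forall>W\<in>T. V \<noteq> W \<longrightarrow> block_chains a b V \<inter> block_chains a b W = {}) \<and>
     (\<Union>V\<in>T. block_chains a b V) = layer_chains F a b"

end

theory Submission
  imports Defs
begin

lemma iv: "0 < (d::nat) \<Longrightarrow> x \<in> {k*d..<Suc k*d} \<longleftrightarrow> x div d = k"
proof
  assume "0<d" "x \<in> {k*d..<Suc k*d}" thus "x div d = k"
    by (intro div_nat_eqI) (auto simp: mult.commute)
next
  assume d: "0<d" "x div d = k"
  thus "x \<in> {k*d..<Suc k*d}"
    by (metis atLeastLessThan_iff div_times_less_eq_dividend dividend_less_div_times mult.commute add.commute mult_Suc)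
qed

lemma dv: "1 \<le> a \<Longrightarrow> a \<le> s \<Longrightarrow> Fab al c (s - a + 1) dvd Fab al c s"
proof -
  assume h: "1 \<le> a" "a \<le> s"
  have e: "Fab al c (s - a + 1) = al^(s-a) * c^(s-a+1)" unfolding Fab_def by simp
  have "s \<noteq> 0" using h by simp
  hence e2: "Fab al c s = al^(s-1) * c^s" unfolding Fab_def by simp
  show ?thesis unfolding e e2 using h by (intro mult_dvd_mono le_imp_power_dvd) auto
qed

lemma pos: "1 \<le> al \<Longrightarrow> 1 \<le> c \<Longrightarrow> 0 < Fab al c n"
  unfolding Fab_def by auto

lemma sub_iv:
  assumes "0 < (d::nat)" "d dvd n" "k < n div d"
  shows "{k*d..<Suc k*d} \<subseteq> {..<n}"
proof -
  have "Suc k \<le> n div d" using assms by simp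
  hence "Suc k * d \<le> n div d * d" by (rule mult_le_mono1)
  also have "\<dots> = n" using assms by simp
  finally show ?thesis by auto
qed

theorem mainTheorem7:
  fixes \<alpha> c a b :: nat
  assumes "\<alpha> \<ge> 1" and "c \<ge> 1" and "1 \<le> a" and "a \<le> b"
  shows "\<exists>T. is_tiling (Fab \<alpha> c) a b T"
proof -
  define F where "F = Fab \<alpha> c"
  define d where "d s = F (s - a + 1)" for s
  define T where "T = PiE {a..b} (\<lambda>s. (\<lambda>k. {k*d s..<Suc k*d s}) ` {..< F s div d s})"
  have dpos: "0 < d s" for s unfolding d_def F_def using pos assms by blast
  have ddv: "s \<in> {a..b} \<Longrightarrow> d s dvd F s" for s unfolding d_def F_def using dv assms by auto
  have fin: "finite T" unfolding T_def by (intro finite_PiE) auto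
  have blk: "is_block F a b V" if VT: "V \<in> T" for V
    unfolding is_block_def is_block_of_type_def
  proof (intro exI[of _ id] conjI ballI)
    show "id permutes {1..b - a + 1}" by (rule permutes_id)
  next
    fix i assume i: "i \<in> {1..b - a + 1}"
    let ?s = "a - 1 + i"
    have s: "?s \<in> {a..b}" using i assms by auto
    then obtain k where k: "k < F ?s div d ?s" "V ?s = {k*d ?s..<Suc k*d ?s}"
      using VT unfolding T_def PiE_iff by blast
    show "V ?s \<subseteq> {..<F ?s}" using k sub_iv[OF dpos ddv[OF s]] by simp
    have "d ?s = F (id i)" unfolding d_def using assms i by auto
    thus "card (V ?s) = F (id i)" using k by simp
  qed
  have disj: "block_chains a b V \<inter> block_chains a b W = {}"
    if VW: "V \<in> T" "W \<in> T" "V \<noteq> W" for V W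
  proof (rule ccontr)
    assume "block_chains a b V \<inter> block_chains a b W \<noteq> {}"
    then obtain x where x: "x \<in> PiE {a..b} V" "x \<in> PiE {a..b} W"
      unfolding block_chains_def by blast
    have "V s = W s" for s
    proof (cases "s \<in> {a..b}")
      case True
      obtain k where k: "V s = {k*d s..<Suc k*d s}"
        using VW(1) True unfolding T_def PiE_iff by blast
      obtain k' where k': "W s = {k'*d s..<Suc k'*d s}"
        using VW(2) True unfolding T_def PiE_iff by blast
      have "x s \<in> V s" "x s \<in> W s" using x True by auto
      hence "k = k'" using k k' iv[OF dpos] by auto
      thus ?thesis using k k' by simp
    next
      case False
      thus ?thesis using VW(1,2) unfolding T_def PiE_iff extensional_def by auto
    qed
    thus False using VW(3) by auto
  qed
  have cov: "(\<Union>V\<in>T. block_chains a b V) = layer_chains F a b"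
  proof
    show "(\<Union>V\<in>T. block_chains a b V) \<subseteq> layer_chains F a b"
    proof
      fix x assume "x \<in> (\<Union>V\<in>T. block_chains a b V)"
      then obtain V where V: "V \<in> T" "x \<in> PiE {a..b} V" unfolding block_chains_def by blast
      have "V s \<subseteq> {..<F s}" if s: "s \<in> {a..b}" for s
      proof -
        obtain k where k: "k < F s div d s" "V s = {k*d s..<Suc k*d s}"
          using V(1) s unfolding T_def PiE_iff by blast
        thus ?thesis using sub_iv[OF dpos ddv[OF s]] by simp
      qed
      thus "x \<in> layer_chains F a b" using V(2) unfolding layer_chains_def PiE_iff by blast
    qed
  next
    show "layer_chains F a b \<subseteq> (\<Union>V\<in>T. block_chains a b V)"
    proof
      fix x assume x: "x \<in> layer_chains F a b"
      define V where "V s = (if s \<in> {a..b} then {(x s div d s)*d s..<Suc (x s div d s)*d s} else undefined)" for s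
      have "V \<in> T" unfolding T_def PiE_iff
      proof (intro conjI ballI)
        fix s assume s: "s \<in> {a..b}"
        have "x s < F s" using x s unfolding layer_chains_def by auto
        hence "x s div d s < F s div d s"
          using ddv[OF s] dpos by (auto elim!: dvdE intro!: less_mult_imp_div_less simp: mult.commute)
        thus "V s \<in> (\<lambda>k. {k*d s..<Suc k*d s}) ` {..< F s div d s}" using s unfolding V_def by auto
      qed (auto simp: V_def extensional_def)
      moreover have "x \<in> block_chains a b V" unfolding block_chains_def PiE_iff
        using x iv[OF dpos] unfolding layer_chains_def PiE_iff V_def by auto
      ultimately show "x \<in> (\<Union>V\<in>T. block_chains a b V)" by blast
    qed
  qed
  have "is_tiling F a b T" unfolding is_tiling_def using fin blk disj cov by blast
  thus ?thesis unfolding F_def by blast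
qed

end
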